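(* Let $\mathcal X$ be a set, let $\kappa:\mathcal X\to\mathbb N\cup\{\infty\}$ and $A_\theta:\mathcal X\to[0,1]$ be maps, and let $\oplus:\mathcal X\times\mathcal X\to\mathcal X$ be a binary operation. For $x_1,\dots,x_m\in\mathcal X$ with $m\ge 3$, write $x_1\oplus\cdots\oplus x_m$ for the right-associated composition $x_1\oplus(x_2\oplus(\cdots\oplus x_m))$. Suppose we are given a notion of independence for pairs $x,y\in\mathcal X$ and of joint independence for finite families in $\mathcal X$. Define \[ \mathcal X_{\mathrm{fin}}:=\{x\in\mathcal X:\kappa(x)<\infty\},\qquad K:=\kappa(\mathcal X_{\mathrm{fin}})\subseteq\mathbb N. \] Assume the following, on $\mathcal X_{\mathrm{fin}}$: (A1) (Accuracy–complexity monotonicity) For all $x,y\in\mathcal X_{\mathrm{fin}}$, if $\kappa(x)\le\kappa(y)$ then $A_\theta(x)\ge A_\theta(y)$. (A2) (Compositionality) For all independent $x,y\in\mathcal X_{\mathrm{fin}}$, \[ \kappa(x\oplus y)=\kappa(x)+\kappa(y),\qquad A_\theta(x\oplus y)=A_\theta(x)\cdot A_\theta(y). \] (A3) For every $u\in K$ and every $m\in\mathbb N$ ($m\ge1$), there exist $x_1,\dots,x_m\in\mathcal X_{\mathrm{fin}}$ with $\kappa(x_i)=u$ for all $i$ and $\{x_1,\dots,x_m\}$ jointly independent; consequently $x_1\oplus\cdots\oplus x_m$ is valid and \[ \kappa(x_1\oplus\cdots\oplus x_m)=mu\in K,\qquad A_\theta(x_1\oplus\cdots\oplus x_m)=\prod_{i=1}^m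 A_\theta(x_i). \] Then there exists $\lambda_\theta\ge 0$ such that for all $x\in\mathcal X_{\mathrm{fin}}$ with $0<A_\theta(x)\le 1$, \[ A_\theta(x)=\exp\!\big(-\lambda_\theta\,\kappa(x)\big). \]
   Context: Interpretation (not needed for the statement): $\mathcal X$ is a space of questions, $\kappa(x)$ is the complexity of question $x$ (minimal number of primitive solution steps), $A_\theta(x)\in[0,1]$ is the probability that model $\theta$ answers $x$ correctly, and $x\oplus y$ is the composite question formed by concatenating $x$ and $y$ with a connector prompt. Independence of $x,y$ is the abstract relation under which (A2) applies; joint independence of a finite family is the abstract property used in (A3), whose stated consequence (validity of the composition, additivity of $\kappa$ and multiplicativity of $A_\theta$ over the right-associated composition) is part of the assumption. *)

theory Defs
  imports Complex_Main "HOL-Library.Extended_Nat"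
begin

fun rcomp :: "('x \<Rightarrow> 'x \<Rightarrow> 'x) \<Rightarrow> 'x list \<Rightarrow> 'x" where
  "rcomp f [] = undefined"
| "rcomp f [x] = x"
| "rcomp f (x # y # xs) = f x (rcomp f (y # xs))"

definition Xfin :: "('x \<Rightarrow> enat) \<Rightarrow> 'x set" where
  "Xfin \<kappa> = {x. \<kappa> x < \<infinity>}"

definition Kset :: "('x \<Rightarrow> enat) \<Rightarrow> nat set" where
  "Kset \<kappa> = {n. \<exists>x \<in> Xfin \<kappa>. \<kappa> x = enat n}"

end

theory Submission
  imports Defs
begin

theorem proposition2:
  fixes \<kappa> :: "'x \<Rightarrow> enat"
    and A :: "'x \<Rightarrow> real"
    and oplus :: "'x \<Rightarrow> 'x \<Rightarrow> 'x"
    and indep :: "'x \<Rightarrow> 'x \<Rightarrow> bool"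
    and jindep :: "'x list \<Rightarrow> bool"
  assumes A_range: "\<And>x. 0 \<le> A x \<and> A x \<le> 1"
    and A1: "\<And>x y. x \<in> Xfin \<kappa> \<Longrightarrow> y \<in> Xfin \<kappa> \<Longrightarrow> \<kappa> x \<le> \<kappa> y \<Longrightarrow> A x \<ge> A y"
    and A2: "\<And>x y. x \<in> Xfin \<kappa> \<Longrightarrow> y \<in> Xfin \<kappa> \<Longrightarrow> indep x y \<Longrightarrow>
               \<kappa> (oplus x y) = \<kappa> x + \<kappa> y \<and> A (oplus x y) = A x * A y"
    and A3: "\<And>u m. u \<in> Kset \<kappa> \<Longrightarrow> m \<ge> 1 \<Longrightarrow>
               \<exists>xs. length xs = m \<and> set xs \<subseteq> Xfin \<kappa> \<and> (\<forall>x \<in> set xs. \<kappa> x = enat u)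
                  \<and> jindep xs
                  \<and> \<kappa> (rcomp oplus xs) = enat (m * u) \<and> m * u \<in> Kset \<kappa>
                  \<and> A (rcomp oplus xs) = (\<Prod>i<m. A (xs ! i))"
  shows "\<exists>lam::real. lam \<ge> 0 \<and>
           (\<forall>x \<in> Xfin \<kappa>. 0 < A x \<and> A x \<le> 1 \<longrightarrow> A x = exp (- lam * real (the_enat (\<kappa> x))))"
proof -
  have eqA: "A x = A y" if "x \<in> Xfin \<kappa>" "y \<in> Xfin \<kappa>" "\<kappa> x = \<kappa> y" for x y
    using A1[OF that(1,2)] A1[OF that(2,1)] that(3) by fastforce
  have fin: "\<kappa> x = enat (the_enat (\<kappa> x))" if "x \<in> Xfin \<kappa>" for x
    using that unfolding Xfin_def by auto
  have key: "\<exists>y \<in> Xfin \<kappa>. \<kappa> y = enat (m * the_enat (\<kappa> x)) \<and> A y = A x ^ m"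
    if x: "x \<in> Xfin \<kappa>" and m: "m \<ge> 1" for x m
  proof -
    define u where "u = the_enat (\<kappa> x)"
    have ku: "\<kappa> x = enat u" using fin[OF x] u_def by simp
    have "u \<in> Kset \<kappa>" using x ku unfolding Kset_def by auto
    from A3[OF this m] obtain xs where xs: "length xs = m" "set xs \<subseteq> Xfin \<kappa>"
      "\<forall>x \<in> set xs. \<kappa> x = enat u" "\<kappa> (rcomp oplus xs) = enat (m * u)"
      "A (rcomp oplus xs) = (\<Prod>i<m. A (xs ! i))" by blast
    have "\<forall>i<m. A (xs ! i) = A x"
    proof (intro allI impI)
      fix i assume "i < m"
      then have "xs ! i \<in> set xs" using xs(1) by simp
      then have "xs ! i \<in> Xfin \<kappa>" "\<kappa> (xs ! i) = \<kappa> x" using xs(2,3) ku by auto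
      then show "A (xs ! i) = A x" using eqA x by blast
    qed
    then have "(\<Prod>i<m. A (xs ! i)) = A x ^ m" by simp
    moreover have "rcomp oplus xs \<in> Xfin \<kappa>" using xs(4) unfolding Xfin_def by simp
    ultimately show ?thesis using xs(4,5) u_def by metis
  qed
  have zero: "A x = 1" if x: "x \<in> Xfin \<kappa>" "\<kappa> x = 0" "A x > 0" for x
  proof -
    obtain y where y: "y \<in> Xfin \<kappa>" "\<kappa> y = enat (2 * the_enat (\<kappa> x))" "A y = A x ^ 2"
      using key[OF x(1), of 2] by auto
    have "\<kappa> y = \<kappa> x" using y(2) x(2) by (simp add: zero_enat_def)
    then have "A x = A x ^ 2" using eqA[OF y(1) x(1)] y(3) by simp
    then show ?thesis using x(3) by (simp add: power2_eq_square)
  qed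
  have ratio: "ln (A x) / real (the_enat (\<kappa> x)) = ln (A y) / real (the_enat (\<kappa> y))"
    if x: "x \<in> Xfin \<kappa>" "A x > 0" "the_enat (\<kappa> x) > 0"
    and y: "y \<in> Xfin \<kappa>" "A y > 0" "the_enat (\<kappa> y) > 0" for x y
  proof -
    define u where "u = the_enat (\<kappa> x)"
    define v where "v = the_enat (\<kappa> y)"
    obtain z1 where z1: "z1 \<in> Xfin \<kappa>" "\<kappa> z1 = enat (v * u)" "A z1 = A x ^ v"
      using key[OF x(1), of v] y(3) u_def v_def by auto
    obtain z2 where z2: "z2 \<in> Xfin \<kappa>" "\<kappa> z2 = enat (u * v)" "A z2 = A y ^ u"
      using key[OF y(1), of u] x(3) u_def v_def by auto
    have "A x ^ v = A y ^ u" using eqA[OF z1(1) z2(1)] z1 z2 by (simp add: mult.commute)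
    then have "ln (A x ^ v) = ln (A y ^ u)" by simp
    then have "real v * ln (A x) = real u * ln (A y)" using x(2) y(2) by (simp add: ln_realpow)
    then show ?thesis using x(3) y(3) u_def v_def by (simp add: field_simps)
  qed
  show ?thesis
  proof (cases "\<exists>x0 \<in> Xfin \<kappa>. A x0 > 0 \<and> the_enat (\<kappa> x0) > 0")
    case True
    then obtain x0 where x0: "x0 \<in> Xfin \<kappa>" "A x0 > 0" "the_enat (\<kappa> x0) > 0" by blast
    define lam where "lam = - ln (A x0) / real (the_enat (\<kappa> x0))"
    have "ln (A x0) \<le> 0" using x0(2) A_range[of x0] by simp
    then have "lam \<ge> 0" unfolding lam_def using x0(3) by (simp add: divide_nonpos_pos)
    moreover have "A x = exp (- lam * real (the_enat (\<kappa> x)))"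
      if x: "x \<in> Xfin \<kappa>" "A x > 0" for x
    proof (cases "the_enat (\<kappa> x) = 0")
      case True
      then have "\<kappa> x = 0" using fin[OF x(1)] by (simp add: zero_enat_def)
      then show ?thesis using zero x True by simp
    next
      case False
      have "lam = - ln (A x) / real (the_enat (\<kappa> x))"
        using ratio[OF x0 x(1,2)] False lam_def by simp
      then have "- lam * real (the_enat (\<kappa> x)) = ln (A x)" using False by simp
      then show ?thesis using x(2) by simp
    qed
    ultimately show ?thesis by blast
  next
    case False
    have "A x = exp (- 0 * real (the_enat (\<kappa> x)))"
      if x: "x \<in> Xfin \<kappa>" "A x > 0" for x
    proof -
      have "the_enat (\<kappa> x) = 0" using False x by auto
      then have "\<kappa> x = 0" using fin[OF x(1)] by (simp add: zero_enat_def)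
      then show ?thesis using zero x by simp
    qed
    then show ?thesis by (intro exI[of _ 0]) auto
  qed
qed

end
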